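(* Let $A\in\mathbb{C}^{n\times m}$, $\alpha_1\ge 1/\sqrt{n}$, $\alpha_2\ge 1/\sqrt{m}$, and let $$U=\Big\{u\in\mathbb{C}^n:\|u\|\le\alpha_1,\ \operatorname{Re}(u)\ge0,\ \textstyle\sum_{i=1}^n u_i=1\Big\},\qquad V=\Big\{v\in\mathbb{C}^m:\|v\|\le\alpha_2,\ \operatorname{Re}(v)\ge0,\ \textstyle\sum_{i=1}^m v_i=1\Big\}.$$ Then there exists $(u^\star,v^\star,\varrho)\in U\times V\times\mathbb{R}$ such that $$\operatorname{Re}(u^{\star H}Av)\ge\varrho\ \ \forall v\in V\qquad\text{and}\qquad \operatorname{Re}(u^HAv^\star)\le\varrho\ \ \forall u\in U.$$ The real number $\varrho$ is uniquely determined and $$\varrho=\max_{u\in U}\min_{v\in V}\operatorname{Re}(u^HAv)=\min_{v\in V}\max_{u\in U}\operatorname{Re}(u^HAv).$$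
   Context: $\|\cdot\|$ is the Euclidean norm on $\mathbb{C}^k$, $u^H$ denotes the conjugate transpose, $\operatorname{Re}(u)\ge0$ is meant componentwise, and $\sum_i u_i=1$ is an equality of complex numbers (so the real parts sum to $1$ and the imaginary parts sum to $0$). *)

theory Defs
  imports "HOL-Analysis.Analysis"
begin

definition bilin :: "complex ^ 'm ^ 'n \<Rightarrow> complex ^ 'n \<Rightarrow> complex ^ 'm \<Rightarrow> complex" where
  "bilin A u v = (\<Sum>i\<in>UNIV. \<Sum>j\<in>UNIV. cnj (u $ i) * (A $ i $ j) * v $ j)"

definition cset :: "real \<Rightarrow> (complex ^ 'n) set" where
  "cset \<alpha> = {u. norm u \<le> \<alpha> \<and> (\<forall>i. Re (u $ i) \<ge> 0) \<and> (\<Sum>i\<in>UNIV. u $ i) = 1}"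

end

theory Submission imports Defs begin

definition gu :: "complex ^ 'm ^ 'n \<Rightarrow> complex ^ 'm \<Rightarrow> complex ^ 'n" where
  "gu A v = (\<chi> i. \<Sum>j\<in>UNIV. A $ i $ j * v $ j)"
definition hv :: "complex ^ 'm ^ 'n \<Rightarrow> complex ^ 'n \<Rightarrow> complex ^ 'm" where
  "hv A u = (\<chi> j. \<Sum>i\<in>UNIV. cnj (A $ i $ j) * u $ i)"

lemma re_cnj_mult: "Re (cnj a * b) = inner a b"
  by (simp add: inner_complex_def)

lemma f_gu: "Re (bilin A u v) = inner u (gu A v)"
proof -
  have "bilin A u v = (\<Sum>i\<in>UNIV. cnj (u $ i) * (gu A v $ i))"
    by (simp add: bilin_def gu_def sum_distrib_left mult.assoc)
  then show ?thesis by (simp add: inner_vec_def re_cnj_mult Re_sum inner_complex_def)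
qed

lemma f_hv: "Re (bilin A u v) = inner (hv A u) v"
proof -
  have "bilin A u v = (\<Sum>j\<in>UNIV. \<Sum>i\<in>UNIV. cnj (u $ i) * (A $ i $ j) * v $ j)"
    unfolding bilin_def by (rule sum.swap)
  also have "\<dots> = (\<Sum>j\<in>UNIV. cnj (hv A u $ j) * v $ j)"
    by (simp add: hv_def sum_distrib_right sum_distrib_left mult_ac)
  finally have "bilin A u v = (\<Sum>j\<in>UNIV. cnj (hv A u $ j) * v $ j)" .
  then show ?thesis by (simp add: inner_vec_def re_cnj_mult Re_sum inner_complex_def)
qed

lemma cont_gu: "continuous_on S (gu A)"
  unfolding gu_def by (intro continuous_intros)
lemma cont_hv: "continuous_on S (hv A)"
  unfolding hv_def by (intro continuous_intros)

lemma cset_closed: "closed (cset a :: (complex^'n::finite) set)"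
proof -
  have eq: "cset a = {u. norm u \<le> a} \<inter> (\<Inter>i. {u::complex^'n. 0 \<le> Re (u $ i)}) \<inter> {u. (\<Sum>i\<in>UNIV. u $ i) = 1}"
    by (auto simp: cset_def)
  have c1: "closed {u::complex^'n. norm u \<le> a}" by (intro closed_Collect_le continuous_intros)
  have c2: "closed {u::complex^'n. 0 \<le> Re (u $ i)}" for i by (intro closed_Collect_le continuous_intros)
  have c3: "closed {u::complex^'n. (\<Sum>i\<in>UNIV. u $ i) = 1}" by (intro closed_Collect_eq continuous_intros)
  show ?thesis unfolding eq by (intro closed_Int closed_INT ballI c1 c2 c3)
qed

lemma cset_compact: "compact (cset a :: (complex^'n::finite) set)"
proof -
  have "bounded (cset a :: (complex^'n::finite) set)"
    unfolding bounded_iff cset_def by auto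
  then show ?thesis using cset_closed by (simp add: compact_eq_bounded_closed)
qed

lemma cset_convex: "convex (cset a :: (complex^'n::finite) set)"
  unfolding convex_def cset_def
proof (safe)
  fix x y :: "complex^'n" and s t :: real
  assume h: "norm x \<le> a" "norm y \<le> a" "0 \<le> s" "0 \<le> t" "s + t = 1"
  have "norm (s *\<^sub>R x + t *\<^sub>R y) \<le> norm (s *\<^sub>R x) + norm (t *\<^sub>R y)"
    by (rule norm_triangle_ineq)
  also have "\<dots> = s * norm x + t * norm y" using h by simp
  also have "\<dots> \<le> s * a + t * a" using h by (intro add_mono mult_left_mono) auto
  also have "\<dots> = (s + t) * a" by (simp add: algebra_simps)
  also have "\<dots> = a" using h by simp
  finally show "norm (s *\<^sub>R x + t *\<^sub>R y) \<le> a" .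
next
  fix x y :: "complex^'n" and s t :: real and i
  assume h: "\<forall>i. 0 \<le> Re (x $ i)" "\<forall>i. 0 \<le> Re (y $ i)" "0 \<le> s" "0 \<le> t"
  then show "0 \<le> Re ((s *\<^sub>R x + t *\<^sub>R y) $ i)" by simp
next
  fix x y :: "complex^'n" and s t :: real
  assume h: "(\<Sum>i\<in>UNIV. x $ i) = 1" "(\<Sum>i\<in>UNIV. y $ i) = 1" "s + t = 1"
  have "(\<Sum>i\<in>UNIV. (s *\<^sub>R x + t *\<^sub>R y) $ i) = s *\<^sub>R (\<Sum>i\<in>UNIV. x $ i) + t *\<^sub>R (\<Sum>i\<in>UNIV. y $ i)"
    by (simp add: sum.distrib scaleR_sum_right)
  then show "(\<Sum>i\<in>UNIV. (s *\<^sub>R x + t *\<^sub>R y) $ i) = 1" using h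
    by (simp add: scaleR_conv_of_real) (metis of_real_1 of_real_add)
qed

lemma cset_nonempty:
  assumes "a \<ge> 1 / sqrt (real CARD('n::finite))"
  shows "(\<chi> i. complex_of_real (1 / real CARD('n))) \<in> (cset a :: (complex^'n) set)"
proof -
  let ?c = "real CARD('n)"
  have c: "?c > 0" by simp
  have "norm (\<chi> i::'n. complex_of_real (1 / ?c)) = sqrt (?c * (1/?c)^2)"
    by (simp add: norm_vec_def L2_set_def norm_divide)
  also have "\<dots> = 1 / sqrt ?c" using c
    by (simp add: power2_eq_square real_sqrt_divide) 
  finally show ?thesis using assms c by (simp add: cset_def)
qed

theorem theorem3:
  fixes A :: "complex ^ 'm::finite ^ 'n::finite" and \<alpha>1 \<alpha>2 :: real
  defines "U \<equiv> (cset \<alpha>1 :: (complex ^ 'n) set)"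
      and "V \<equiv> (cset \<alpha>2 :: (complex ^ 'm) set)"
  assumes "\<alpha>1 \<ge> 1 / sqrt (real CARD('n))"
      and "\<alpha>2 \<ge> 1 / sqrt (real CARD('m))"
  shows "\<exists>us\<in>U. \<exists>vs\<in>V. \<exists>\<rho>::real.
           (\<forall>v\<in>V. Re (bilin A us v) \<ge> \<rho>) \<and> (\<forall>u\<in>U. Re (bilin A u vs) \<le> \<rho>)
         \<and> (\<forall>us'\<in>U. \<forall>vs'\<in>V. \<forall>\<rho>'::real.
              (\<forall>v\<in>V. Re (bilin A us' v) \<ge> \<rho>') \<and> (\<forall>u\<in>U. Re (bilin A u vs') \<le> \<rho>')
              \<longrightarrow> \<rho>' = \<rho>)
         \<and> (\<forall>u\<in>U. \<exists>v0\<in>V. Re (bilin A u v0) = (INF v\<in>V. Re (bilin A u v)))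
         \<and> (\<exists>u0\<in>U. (INF v\<in>V. Re (bilin A u0 v)) = (SUP u\<in>U. INF v\<in>V. Re (bilin A u v)))
         \<and> (\<forall>v\<in>V. \<exists>u0\<in>U. Re (bilin A u0 v) = (SUP u\<in>U. Re (bilin A u v)))
         \<and> (\<exists>v0\<in>V. (SUP u\<in>U. Re (bilin A u v0)) = (INF v\<in>V. SUP u\<in>U. Re (bilin A u v)))
         \<and> \<rho> = (SUP u\<in>U. INF v\<in>V. Re (bilin A u v))
         \<and> \<rho> = (INF v\<in>V. SUP u\<in>U. Re (bilin A u v))"
proof -
  define f where "f = (\<lambda>u v. Re (bilin A u v))"
  have Ucc: "compact U" "convex U" "U \<noteq> {}" "closed U"
    using cset_compact cset_convex cset_nonempty[OF assms(3)] cset_closed unfolding U_def by blast+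
  have Vcc: "compact V" "convex V" "V \<noteq> {}" "closed V"
    using cset_compact cset_convex cset_nonempty[OF assms(4)] cset_closed unfolding V_def by blast+
  let ?K = "U \<times> V"
  have Kcc: "compact ?K" "convex ?K" "?K \<noteq> {}" "closed ?K"
    using Ucc Vcc by (auto intro: compact_Times convex_Times closed_Times)
  define F where "F p = (gu A (snd p), - hv A (fst p))" for p
  define T where "T p = closest_point ?K (p + F p)" for p
  have contF: "continuous_on ?K F"
    unfolding F_def by (intro continuous_intros continuous_on_compose2[OF cont_gu] continuous_on_compose2[OF cont_hv]) auto
  have "continuous_on ?K T"
    unfolding T_def
    by (rule continuous_on_compose2[OF continuous_on_closest_point[OF Kcc(2,4,3)]])
       (auto intro: continuous_intros contF)
  moreover have "T \<in> ?K \<rightarrow> ?K"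
    unfolding T_def using closest_point_in_set[OF Kcc(4,3)] by blast
  ultimately obtain p where p: "p \<in> ?K" "T p = p"
    using brouwer[OF Kcc(1-3)] by blast
  obtain us vs where pp: "p = (us, vs)" by fastforce
  have usU: "us \<in> U" and vsV: "vs \<in> V" using p pp by auto
  have dot: "inner (F p) (y - p) \<le> 0" if "y \<in> ?K" for y
    using closest_point_dot[OF Kcc(2,4) that, of "p + F p"] p(2) unfolding T_def by simp
  define \<rho> where "\<rho> = f us vs"
  have sad1: "f u vs \<le> \<rho>" if "u \<in> U" for u
  proof -
    have "inner (F p) ((u, vs) - p) \<le> 0" using dot[of "(u, vs)"] that vsV by simp
    then have "inner (gu A vs) (u - us) \<le> 0" by (simp add: F_def pp)
    then have "inner (gu A vs) u \<le> inner (gu A vs) us" by (simp add: inner_diff_right)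
    then show ?thesis unfolding \<rho>_def f_def f_gu by (simp add: inner_commute)
  qed
  have sad2: "f us v \<ge> \<rho>" if "v \<in> V" for v
  proof -
    have "inner (F p) ((us, v) - p) \<le> 0" using dot[of "(us, v)"] that usU by simp
    then have "inner (hv A us) (v - vs) \<ge> 0" by (simp add: F_def pp)
    then show ?thesis unfolding \<rho>_def f_def f_hv by (simp add: inner_diff_right)
  qed
  have contu: "continuous_on S (f u)" for u S
    unfolding f_def f_hv by (intro continuous_intros)
  have contv: "continuous_on S (\<lambda>u. f u v)" for v S
    unfolding f_def f_gu by (intro continuous_intros)
  have minv: "\<exists>v0\<in>V. f u v0 = (INF v\<in>V. f u v) \<and> (\<forall>v\<in>V. f u v0 \<le> f u v)" for u
  proof -
    obtain v0 where v0: "v0 \<in> V" "\<forall>v\<in>V. f u v0 \<le> f u v"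
      using continuous_attains_inf[OF Vcc(1,3) contu] by blast
    have "(INF v\<in>V. f u v) = f u v0"
      by (rule cInf_eq_minimum) (use v0 in auto)
    then show ?thesis using v0 by (intro bexI[of _ v0] conjI) simp_all
  qed
  have maxu: "\<exists>u0\<in>U. f u0 v = (SUP u\<in>U. f u v) \<and> (\<forall>u\<in>U. f u v \<le> f u0 v)" for v
  proof -
    obtain u0 where u0: "u0 \<in> U" "\<forall>u\<in>U. f u v \<le> f u0 v"
      using continuous_attains_sup[OF Ucc(1,3) contv] by blast
    have "(SUP u\<in>U. f u v) = f u0 v"
      by (rule cSup_eq_maximum) (use u0 in auto)
    then show ?thesis using u0 by (intro bexI[of _ u0] conjI) simp_all
  qed
  have Ius: "(INF v\<in>V. f us v) = \<rho>"
    unfolding \<rho>_def by (rule cInf_eq_minimum) (use sad2 vsV \<rho>_def in auto)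
  have Iu: "(INF v\<in>V. f u v) \<le> \<rho>" if "u \<in> U" for u
  proof -
    obtain v0 where "v0 \<in> V" "f u v0 = (INF v\<in>V. f u v)" "\<forall>v\<in>V. f u v0 \<le> f u v"
      using minv[of u] by blast
    then have "(INF v\<in>V. f u v) \<le> f u vs" using vsV by metis
    also have "\<dots> \<le> \<rho>" using sad1[OF that] .
    finally show ?thesis .
  qed
  have SI: "(SUP u\<in>U. INF v\<in>V. f u v) = \<rho>"
  proof (rule cSup_eq_maximum)
    show "\<rho> \<in> (\<lambda>u. INF v\<in>V. f u v) ` U" using Ius usU by (metis image_eqI)
  qed (use Iu in auto)
  have Svs: "(SUP u\<in>U. f u vs) = \<rho>"
    unfolding \<rho>_def by (rule cSup_eq_maximum) (use sad1 usU \<rho>_def in auto)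
  have Sv: "(SUP u\<in>U. f u v) \<ge> \<rho>" if "v \<in> V" for v
  proof -
    obtain u0 where "u0 \<in> U" "f u0 v = (SUP u\<in>U. f u v)" "\<forall>u\<in>U. f u v \<le> f u0 v"
      using maxu[of v] by blast
    then have "f us v \<le> (SUP u\<in>U. f u v)" using usU by metis
    then show ?thesis using sad2[OF that] by linarith
  qed
  have IS: "(INF v\<in>V. SUP u\<in>U. f u v) = \<rho>"
  proof (rule cInf_eq_minimum)
    show "\<rho> \<in> (\<lambda>v. SUP u\<in>U. f u v) ` V" using Svs vsV by (metis image_eqI)
  qed (use Sv in auto)
  have uniq: "\<rho>' = \<rho>" if "us' \<in> U" "vs' \<in> V" "\<forall>v\<in>V. f us' v \<ge> \<rho>'" "\<forall>u\<in>U. f u vs' \<le> \<rho>'"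
    for us' vs' \<rho>'
  proof -
    have a: "\<rho>' \<le> f us' vs" using that(3) vsV by blast
    have b: "f us' vs \<le> \<rho>" using sad1 that(1) by blast
    have c: "\<rho> \<le> f us vs'" using sad2 that(2) by blast
    have d: "f us vs' \<le> \<rho>'" using that(4) usU by blast
    show ?thesis using a b c d by linarith
  qed
  have G1: "\<forall>v\<in>V. f us v \<ge> \<rho>" using sad2 by blast
  have G2: "\<forall>u\<in>U. f u vs \<le> \<rho>" using sad1 by blast
  have G3: "\<forall>us'\<in>U. \<forall>vs'\<in>V. \<forall>\<rho>'::real.
              (\<forall>v\<in>V. f us' v \<ge> \<rho>') \<and> (\<forall>u\<in>U. f u vs' \<le> \<rho>') \<longrightarrow> \<rho>' = \<rho>"
    using uniq by blast
  have G4: "\<forall>u\<in>U. \<exists>v0\<in>V. f u v0 = (INF v\<in>V. f u v)" using minv by blast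
  have G5: "\<exists>u0\<in>U. (INF v\<in>V. f u0 v) = (SUP u\<in>U. INF v\<in>V. f u v)" using Ius SI usU by (intro bexI[of _ us]) simp_all
  have G6: "\<forall>v\<in>V. \<exists>u0\<in>U. f u0 v = (SUP u\<in>U. f u v)" using maxu by blast
  have G7: "\<exists>v0\<in>V. (SUP u\<in>U. f u v0) = (INF v\<in>V. SUP u\<in>U. f u v)" using Svs IS vsV by (intro bexI[of _ vs]) simp_all
  have "\<exists>us\<in>U. \<exists>vs\<in>V. \<exists>\<rho>::real.
           (\<forall>v\<in>V. f us v \<ge> \<rho>) \<and> (\<forall>u\<in>U. f u vs \<le> \<rho>)
         \<and> (\<forall>us'\<in>U. \<forall>vs'\<in>V. \<forall>\<rho>'::real.
              (\<forall>v\<in>V. f us' v \<ge> \<rho>') \<and> (\<forall>u\<in>U. f u vs' \<le> \<rho>') \<longrightarrow> \<rho>' = \<rho>)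
         \<and> (\<forall>u\<in>U. \<exists>v0\<in>V. f u v0 = (INF v\<in>V. f u v))
         \<and> (\<exists>u0\<in>U. (INF v\<in>V. f u0 v) = (SUP u\<in>U. INF v\<in>V. f u v))
         \<and> (\<forall>v\<in>V. \<exists>u0\<in>U. f u0 v = (SUP u\<in>U. f u v))
         \<and> (\<exists>v0\<in>V. (SUP u\<in>U. f u v0) = (INF v\<in>V. SUP u\<in>U. f u v))
         \<and> \<rho> = (SUP u\<in>U. INF v\<in>V. f u v)
         \<and> \<rho> = (INF v\<in>V. SUP u\<in>U. f u v)"
    apply (rule bexI[OF _ usU], rule bexI[OF _ vsV], rule exI[of _ \<rho>])
    apply (intro conjI)
    apply (fact G1) apply (fact G2) apply (fact G3) apply (fact G4) apply (fact G5) apply (fact G6) apply (fact G7)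
    using SI IS by simp_all
  then show ?thesis unfolding f_def .
qed

end
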